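(* Let $\Omega$ be a bounded domain in $\mathbb{R}^n$ (or $\mathbb{C}^n$), let $x\in\overline\Omega$, and let $\mathcal{E}$ be a closed subspace of $\mathcal{C}(\overline\Omega)$ (with the sup-norm). Suppose there exist constants $0<\alpha<1$, $0<s\leq 1$, $0<t<1$, $0<A<1$ and $C>0$ such that for each neighbourhood $U$ of $x$ (in $\overline\Omega$) with $\mathrm{r}_x(U)<1$, there exists a function $f_U\in\mathcal{E}$ with the properties 1) $f_U(x)=1$; 2) $|f_U(y)|\leq\alpha$ for all $y\in\overline\Omega\setminus U$; 3) $|f_U(y)|\leq C\,\big(\log[1/\mathrm{r}_x(U)]\big)^t$ for all $y\in U$; and 4) $\{y\in\overline\Omega : |f_U(y)|<1+\varepsilon^s\}\supset B(x;A\,\mathrm{r}_x(U)\,\varepsilon)$ for every $0<\varepsilon<1$. Then there exists a function $F\in\mathcal{E}$ which peaks at $x$.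
   Context: $\mathcal{C}(\overline\Omega)$ denotes the space of all complex-valued continuous functions on $\overline\Omega$. For a set $U$ containing $x$, $\mathrm{r}_x(U):=\sup_{y\in U}|y-x|$, where $|\cdot|$ is the Euclidean norm. For $y\in\overline\Omega$ and $r>0$, $B(y;r):=\overline\Omega\cap\mathbb{B}(y;r)$, where $\mathbb{B}(y;r)$ is the open Euclidean ball of center $y$ and radius $r$. A function $f\in\mathcal{E}$ is said to peak at $x$ if $f(x)=1$ and $|f(y)|<1$ for all $y\in\overline\Omega\setminus\{x\}$. *)

theory Defs
  imports "HOL-Analysis.Analysis"
begin

text \<open>Elements of C(closure Omega) are represented by functions 'a => complex that are
  continuous on closure Omega and vanish outside closure Omega (canonical representatives).\<close>
definition cfun_space :: "'a::euclidean_space set \<Rightarrow> ('a \<Rightarrow> complex) set" where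
  "cfun_space \<Omega> = {f. continuous_on (closure \<Omega>) f \<and> (\<forall>y. y \<notin> closure \<Omega> \<longrightarrow> f y = 0)}"

definition closed_subspace_C :: "'a::euclidean_space set \<Rightarrow> ('a \<Rightarrow> complex) set \<Rightarrow> bool" where
  "closed_subspace_C \<Omega> E \<longleftrightarrow>
     E \<subseteq> cfun_space \<Omega> \<and>
     (\<lambda>y. 0) \<in> E \<and>
     (\<forall>f\<in>E. \<forall>g\<in>E. (\<lambda>y. f y + g y) \<in> E) \<and>
     (\<forall>c::complex. \<forall>f\<in>E. (\<lambda>y. c * f y) \<in> E) \<and>
     (\<forall>f\<in>cfun_space \<Omega>.
        (\<forall>e>0. \<exists>g\<in>E. \<forall>y\<in>closure \<Omega>. cmod (f y - g y) \<le> e) \<longrightarrow> f \<in> E)"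

definition nbhd_in_closure :: "'a::euclidean_space set \<Rightarrow> 'a \<Rightarrow> 'a set \<Rightarrow> bool" where
  "nbhd_in_closure \<Omega> x U \<longleftrightarrow> U \<subseteq> closure \<Omega> \<and>
     (\<exists>V. open V \<and> x \<in> V \<and> closure \<Omega> \<inter> V \<subseteq> U)"

definition rx :: "'a::euclidean_space \<Rightarrow> 'a set \<Rightarrow> real" where
  "rx x U = (SUP y\<in>U. dist y x)"

definition Bcl :: "'a::euclidean_space set \<Rightarrow> 'a \<Rightarrow> real \<Rightarrow> 'a set" where
  "Bcl \<Omega> y r = closure \<Omega> \<inter> ball y r"

definition peaks_at :: "'a::euclidean_space set \<Rightarrow> ('a \<Rightarrow> complex) \<Rightarrow> 'a \<Rightarrow> bool" where
  "peaks_at \<Omega> f x \<longleftrightarrow> f x = 1 \<and> (\<forall>y\<in>closure \<Omega> - {x}. cmod (f y) < 1)"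

end

theory Submission
  imports Defs
begin


lemma peak_construction:
  fixes \<Omega> :: "'a::euclidean_space set" and E and x :: 'a
    and g :: "nat \<Rightarrow> 'a \<Rightarrow> complex" and \<rho> M :: "nat \<Rightarrow> real"
  assumes E: "closed_subspace_C \<Omega> E" and gE: "\<And>k. g k \<in> E" and gx: "\<And>k. g k x = 1"
  and al: "0 \<le> \<alpha>" "\<alpha> < 1" and s: "0 < s" and A: "0 < A"
  and N: "1 \<le> N"
  and \<rho>pos: "\<And>k. 0 < \<rho> k" and \<rho>dec: "\<And>k. \<rho> (Suc k) < \<rho> k" and \<rho>0: "\<And>d. d > 0 \<Longrightarrow> \<exists>k. \<rho> k < d"
  and far: "\<And>k y. y \<in> closure \<Omega> \<Longrightarrow> \<rho> k < dist y x \<Longrightarrow> cmod (g k y) \<le> \<alpha>"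
  and bnd: "\<And>k y. cmod (g k y) \<le> M k"
  and near: "\<And>k y \<epsilon>. y \<in> closure \<Omega> \<Longrightarrow> 0 < \<epsilon> \<Longrightarrow> \<epsilon> < 1 \<Longrightarrow> dist y x < A * \<rho> k * \<epsilon>
               \<Longrightarrow> cmod (g k y) < 1 + \<epsilon> powr s"
  and P2: "\<And>k. k \<ge> 1 \<Longrightarrow> (2 * \<rho> k / (A * \<rho> (k-1))) powr s \<le> (1-\<alpha>) / (4 * (N + real k + 1))"
  and P3: "\<And>k. M k \<le> (1-\<alpha>)/4 * (N + real k)"
  and summ: "summable (\<lambda>k. (N/(N + real k) - N/(N + real (Suc k))) * M k)"
  shows "\<exists>F\<in>E. peaks_at \<Omega> F x"
proof -
  define \<beta> where "\<beta> = 1 - \<alpha>"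
  have \<beta>: "\<beta> > 0" using al by (simp add: \<beta>_def)
  define w where "w k = N/(N + real k) - N/(N + real (Suc k))" for k
  have w_eq: "w k = N / ((N + real k) * (N + real k + 1))" for k
    using N by (simp add: w_def field_simps)
  have wpos: "w k > 0" for k using N by (simp add: w_eq)
  have lim0: "(\<lambda>n. N / (N + real (n + m))) \<longlonglongrightarrow> 0" for m
  proof -
    have "filterlim (\<lambda>n. N + real (n + m)) at_top sequentially"
    proof (subst filterlim_at_top, intro allI)
      fix Z :: real
      show "eventually (\<lambda>n. Z \<le> N + real (n + m)) sequentially"
        unfolding eventually_sequentially
        by (rule exI[of _ "nat \<lceil>Z\<rceil>"]) (use N in linarith)
    qed
    then show ?thesis
      by (intro tendsto_divide_0[OF tendsto_const] filterlim_at_top_imp_at_infinity)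
  qed
  have tail: "(\<lambda>i. w (i + m)) sums (N / (N + real m))" for m
  proof -
    have "(\<lambda>n. N / (N + real (n + m)) - N / (N + real (Suc n + m))) sums (N / (N + real (0 + m)) - 0)"
      by (rule telescope_sums'[OF lim0])
    then show ?thesis by (simp add: w_def add.commute)
  qed
  have wsums: "w sums 1" using tail[of 0] N by simp
  have finsum: "(\<Sum>k<m. w k) = 1 - N / (N + real m)" for m
  proof -
    have "(\<Sum>k<m. w k) = (\<Sum>k<m. N / (N + real k) - N / (N + real (Suc k)))" by (simp add: w_def)
    also have "\<dots> = N / (N + real 0) - N / (N + real m)"
      by (rule sum_lessThan_telescope'[where f = "\<lambda>k. N / (N + real k)"])
    finally show ?thesis using N by simp
  qed
  have Mnn: "M k \<ge> 0" for k using bnd[of k x] by (meson norm_ge_zero order_trans)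
  have summ': "summable (\<lambda>k. w k * M k)" using summ by (simp add: w_def)
  have nt_le: "norm (complex_of_real (w k) * g k y) \<le> w k * M k" for k y
    using bnd[of k y] wpos[of k] by (simp add: norm_mult mult_left_mono)
  define F where "F y = (\<Sum>k. complex_of_real (w k) * g k y)" for y
  have ul: "uniform_limit UNIV (\<lambda>n y. \<Sum>i<n. complex_of_real (w i) * g i y) F sequentially"
    unfolding F_def by (rule Weierstrass_m_test[OF nt_le summ'])
  have Ecfun: "E \<subseteq> cfun_space \<Omega>" and E0: "(\<lambda>y. 0) \<in> E"
    and Eadd: "\<And>f g. f \<in> E \<Longrightarrow> g \<in> E \<Longrightarrow> (\<lambda>y. f y + g y) \<in> E"
    and Esc: "\<And>c f. f \<in> E \<Longrightarrow> (\<lambda>y. c * f y) \<in> E"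
    and Ecl: "\<And>f. f \<in> cfun_space \<Omega> \<Longrightarrow> (\<forall>e>0. \<exists>g\<in>E. \<forall>y\<in>closure \<Omega>. cmod (f y - g y) \<le> e) \<Longrightarrow> f \<in> E"
    using E unfolding closed_subspace_C_def by blast+
  have gcont: "continuous_on (closure \<Omega>) (g k)" and gz: "\<And>y. y \<notin> closure \<Omega> \<Longrightarrow> g k y = 0" for k
    using Ecfun gE[of k] unfolding cfun_space_def by auto
  have SE: "(\<lambda>y. \<Sum>i<n. complex_of_real (w i) * g i y) \<in> E" for n
  proof (induction n)
    case 0 then show ?case using E0 by simp
  next
    case (Suc n)
    have "(\<lambda>y. (\<Sum>i<n. complex_of_real (w i) * g i y) + complex_of_real (w n) * g n y) \<in> E"
      by (rule Eadd[OF Suc Esc[OF gE]])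
    then show ?case by simp
  qed
  have Fcont: "continuous_on (closure \<Omega>) F"
  proof (rule uniform_limit_theorem[OF _ uniform_limit_on_subset[OF ul subset_UNIV]])
    show "\<forall>\<^sub>F n in sequentially. continuous_on (closure \<Omega>) (\<lambda>y. \<Sum>i<n. complex_of_real (w i) * g i y)"
      by (intro always_eventually allI continuous_on_sum continuous_on_mult continuous_on_const gcont)
  qed simp
  have Fz: "F y = 0" if "y \<notin> closure \<Omega>" for y
    using gz[OF that] by (simp add: F_def)
  have Fcf: "F \<in> cfun_space \<Omega>" using Fcont Fz by (simp add: cfun_space_def)
  have FE: "F \<in> E"
  proof (rule Ecl[OF Fcf], intro allI impI)
    fix e :: real assume "e > 0"
    from uniform_limitD[OF ul this] obtain n where
      n: "\<forall>y\<in>UNIV. dist (\<Sum>i<n. complex_of_real (w i) * g i y) (F y) < e"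
      by (auto simp: eventually_sequentially)
    show "\<exists>g\<in>E. \<forall>y\<in>closure \<Omega>. cmod (F y - g y) \<le> e"
      using n SE[of n] by (intro bexI[of _ "\<lambda>y. \<Sum>i<n. complex_of_real (w i) * g i y"])
         (auto simp: dist_norm norm_minus_commute less_imp_le)
  qed
  have Fx: "F x = 1"
  proof -
    have "(\<lambda>k. complex_of_real (w k)) sums complex_of_real 1"
      using wsums sums_of_real_iff[of w 1] by (simp del: of_real_1)
    then show ?thesis by (simp add: F_def gx sums_iff)
  qed
  have \<rho>mono: "\<rho> j \<le> \<rho> i" if "i \<le> j" for i j
    using lift_Suc_antimono_le[of \<rho>, OF _ that] \<rho>dec less_imp_le by blast
  have "\<forall>y\<in>closure \<Omega> - {x}. cmod (F y) < 1"
  proof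
    fix y assume y: "y \<in> closure \<Omega> - {x}"
    define d where "d = dist y x"
    have d: "d > 0" using y by (simp add: d_def)
    define nt where "nt k = w k * cmod (g k y)" for k
    have nt_nn: "nt k \<ge> 0" for k using wpos[of k] by (simp add: nt_def)
    have nt_le: "nt k \<le> w k * M k" for k
      using bnd[of k y] wpos[of k] by (simp add: nt_def mult_left_mono)
    have nt_sum: "summable nt"
      by (rule summable_comparison_test'[OF summ']) (use nt_nn nt_le in simp)
    have Fle: "cmod (F y) \<le> suminf nt"
    proof -
      have "norm (complex_of_real (w k) * g k y) = nt k" for k
        using wpos[of k] by (simp add: nt_def norm_mult)
      then have "summable (\<lambda>k. norm (complex_of_real (w k) * g k y))" using nt_sum by simp
      from summable_norm[OF this] show ?thesis
        using \<open>\<And>k. norm (complex_of_real (w k) * g k y) = nt k\<close> by (simp add: F_def)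
    qed
    show "cmod (F y) < 1"
    proof (cases "\<rho> 0 < d")
      case True
      have "nt k \<le> w k * \<alpha>" for k
      proof -
        have "\<rho> k < d" using \<rho>mono[of 0 k] True by simp
        then have "cmod (g k y) \<le> \<alpha>" using far[of y k] y by (simp add: d_def)
        then show ?thesis using wpos[of k] by (simp add: nt_def mult_left_mono)
      qed
      moreover have "(\<lambda>k. w k * \<alpha>) sums (1 * \<alpha>)" by (rule sums_mult2[OF wsums])
      ultimately have "suminf nt \<le> \<alpha>"
        using suminf_le[OF _ nt_sum, of "\<lambda>k. w k * \<alpha>"] by (simp add: sums_iff)
      then show ?thesis using Fle al by linarith
    next
      case False
      obtain k0 where k0: "\<rho> k0 < d" using \<rho>0[OF d] by blast
      have "\<exists>m. \<not> \<rho> m < d \<and> \<rho> (Suc m) < d"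
      proof (rule ccontr)
        assume H: "\<not> ?thesis"
        have "\<not> \<rho> k < d" for k
          by (induction k) (use False H in auto)
        then show False using k0 by blast
      qed
      then obtain m where m1: "d \<le> \<rho> m" and m2: "\<rho> (Suc m) < d" by (auto simp: not_less)
      define q where "q = N + real m + 1"
      have q: "q > 0" using N by (simp add: q_def)
      have split: "suminf nt = (\<Sum>i. nt (i + Suc m)) + (\<Sum>i<Suc m. nt i)"
        by (rule suminf_split_initial_segment[OF nt_sum])
      have tl: "(\<Sum>i. nt (i + Suc m)) \<le> \<alpha> * (N / q)"
      proof -
        have "nt (i + Suc m) \<le> w (i + Suc m) * \<alpha>" for i
        proof -
          have "\<rho> (i + Suc m) < d" using \<rho>mono[of "Suc m" "i + Suc m"] m2 by simp
          then have "cmod (g (i + Suc m) y) \<le> \<alpha>" using far[of y "i + Suc m"] y by (simp add: d_def)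
          then show ?thesis using wpos[of "i + Suc m"] by (simp add: nt_def mult_left_mono)
        qed
        moreover have "(\<lambda>i. w (i + Suc m) * \<alpha>) sums (N / (N + real (Suc m)) * \<alpha>)"
          by (rule sums_mult2[OF tail])
        moreover have "summable (\<lambda>i. nt (i + Suc m))" using nt_sum summable_iff_shift[of nt "Suc m"] by blast
        ultimately have "(\<Sum>i. nt (i + Suc m)) \<le> N / (N + real (Suc m)) * \<alpha>"
          using suminf_le[of "\<lambda>i. nt (i + Suc m)" "\<lambda>i. w (i + Suc m) * \<alpha>"] by (simp add: sums_iff)
        moreover have "N + real (Suc m) = q" by (simp add: q_def)
        ultimately show ?thesis by (simp add: mult.commute)
      qed
      have wm: "w m * (N + real m) = N / q"
      proof -
        have p: "N + real m \<noteq> 0" using N by linarith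
        have "w m * (N + real m) = ((N + real m) * N) / ((N + real m) * (N + real m + 1))"
          by (simp add: w_eq mult.commute)
        also have "\<dots> = N / q" using p by (simp add: q_def)
        finally show ?thesis .
      qed
      have ntm: "nt m \<le> \<beta> / 4 * (N / q)"
      proof -
        have "nt m \<le> w m * M m" by (rule nt_le)
        also have "\<dots> \<le> w m * ((1-\<alpha>)/4 * (N + real m))" using P3[of m] wpos[of m] by (simp add: mult_left_mono)
        also have "\<dots> = \<beta> / 4 * (w m * (N + real m))" by (simp add: \<beta>_def)
        finally show ?thesis using wm by simp
      qed
      have init: "(\<Sum>i<m. nt i) \<le> (1 - N / (N + real m)) + \<beta> / (4 * q)"
      proof (cases "m = 0")
        case True then show ?thesis using \<beta> q N by simp
      next
        case False
        define \<theta> where "\<theta> = 2 * \<rho> m / (A * \<rho> (m-1))"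
        have \<theta>s: "\<theta> powr s \<le> \<beta> / (4 * q)"
          using P2[of m] False by (simp add: \<theta>_def \<beta>_def q_def)
        have \<theta>1: "\<theta> < 1"
        proof (rule ccontr)
          assume "\<not> \<theta> < 1"
          then have "1 \<le> \<theta> powr s" using s by (simp add: ge_one_powr_ge_zero)
          moreover have "\<beta> / (4 * q) < 1"
          proof -
            have "\<beta> \<le> 1" using al by (simp add: \<beta>_def)
            moreover have "4 * q > 1" using N by (simp add: q_def)
            ultimately show ?thesis using \<beta> by (simp add: divide_less_eq)
          qed
          ultimately show False using \<theta>s by linarith
        qed
        have gi: "cmod (g i y) \<le> 1 + \<theta> powr s" if i: "i < m" for i
        proof -
          define \<epsilon> where "\<epsilon> = 2 * \<rho> m / (A * \<rho> i)"
          have \<epsilon>pos: "\<epsilon> > 0" using \<rho>pos[of m] \<rho>pos[of i] A by (simp add: \<epsilon>_def)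
          have "\<rho> (m-1) \<le> \<rho> i" using \<rho>mono[of i "m-1"] i by simp
          then have \<epsilon>\<theta>: "\<epsilon> \<le> \<theta>" unfolding \<epsilon>_def \<theta>_def
            using \<rho>pos[of m] \<rho>pos[of i] \<rho>pos[of "m-1"] A
            by (intro divide_left_mono mult_pos_pos) (auto intro: mult_left_mono)
          have "A * \<rho> i * \<epsilon> = 2 * \<rho> m" using A \<rho>pos[of i] by (simp add: \<epsilon>_def)
          then have "dist y x < A * \<rho> i * \<epsilon>" using m1 \<rho>pos[of m] by (simp add: d_def)
          then have "cmod (g i y) < 1 + \<epsilon> powr s"
            using near[of y \<epsilon> i] y \<epsilon>pos \<epsilon>\<theta> \<theta>1 by simp
          moreover have "\<epsilon> powr s \<le> \<theta> powr s" using \<epsilon>pos \<epsilon>\<theta> s by (simp add: powr_mono2)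
          ultimately show ?thesis by simp
        qed
        have "(\<Sum>i<m. nt i) \<le> (\<Sum>i<m. w i * (1 + \<theta> powr s))"
          by (rule sum_mono) (use gi wpos in \<open>auto simp: nt_def intro: mult_left_mono\<close>)
        also have "\<dots> = (1 - N / (N + real m)) * (1 + \<theta> powr s)"
          by (simp add: sum_distrib_right[symmetric] finsum)
        also have "\<dots> \<le> (1 - N / (N + real m)) + \<theta> powr s"
        proof -
          have "0 \<le> 1 - N / (N + real m)" using N by simp
          moreover have "1 - N / (N + real m) \<le> 1" using N by simp
          ultimately have "(1 - N / (N + real m)) * \<theta> powr s \<le> \<theta> powr s"
            by (simp add: mult_left_le_one_le)
          moreover have "(1 - N / (N + real m)) * (1 + \<theta> powr s) = (1 - N / (N + real m)) + (1 - N / (N + real m)) * \<theta> powr s"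
            by (simp only: distrib_left mult_1_right)
          ultimately show ?thesis by linarith
        qed
        finally show ?thesis using \<theta>s by linarith
      qed
      have "1 - N / (N + real m) \<le> 1 - N / q"
        using N by (simp add: q_def frac_le)
      have "suminf nt \<le> \<alpha> * (N / q) + ((1 - N / q) + \<beta> / (4 * q) + \<beta> / 4 * (N / q))"
        using split tl init ntm \<open>1 - N / (N + real m) \<le> 1 - N / q\<close> by simp
      also have "\<dots> < 1"
      proof -
        have "\<beta> / (4 * q) \<le> \<beta> / 4 * (N / q)" using N q \<beta> by (simp add: field_simps)
        moreover have e1: "\<beta> / 4 * (N / q) = (N / q - \<alpha> * (N / q)) / 4" using q by (simp add: \<beta>_def field_simps)
        moreover have "N / q - \<alpha> * (N / q) > 0"
        proof -
          have "\<alpha> * (N / q) < 1 * (N / q)" using al N q by (intro mult_strict_right_mono) auto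
          then show ?thesis by simp
        qed
        moreover have "\<And>X Y b b1::real. b1 \<le> b \<Longrightarrow> b = (X - Y) / 4 \<Longrightarrow> 0 < X - Y \<Longrightarrow> Y + (1 - X + b1 + b) < 1"
          by (auto simp: field_simps)
        ultimately show ?thesis by blast
      qed
      finally show ?thesis using Fle by linarith
    qed
  qed
  then show ?thesis using FE Fx by (auto simp: peaks_at_def)
qed


lemma powr_eventually:
  fixes \<delta> K :: real assumes "\<delta> > 0"
  shows "\<exists>N0::real. \<forall>j\<ge>N0. K \<le> j powr \<delta>"
proof (intro exI allI impI)
  fix j :: real assume j: "max 1 (\<bar>K\<bar> powr (1/\<delta>)) \<le> j"
  have "(\<bar>K\<bar> powr (1/\<delta>)) powr \<delta> \<le> j powr \<delta>"
    using j assms by (intro powr_mono2) auto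
  moreover have "(\<bar>K\<bar> powr (1/\<delta>)) powr \<delta> = \<bar>K\<bar>"
    using assms by (simp add: powr_powr)
  ultimately show "K \<le> j powr \<delta>" by linarith
qed

lemma exp_decay_bound:
  fixes s A \<beta> a j :: real
  assumes s: "s > 0" and A: "A > 0" and \<beta>: "\<beta> > 0" and a: "a > 1" and j: "j \<ge> 1"
    and z1: "j powr ((a-1)/2) \<ge> 1"
    and z2: "j powr ((a-1)/2) \<ge> (\<bar>s * ln (2/A)\<bar> + \<bar>ln (4/\<beta>)\<bar> + ln 2 + 2/(a-1)) / s"
  shows "(2/A) powr s * exp (- s * j powr (a-1)) \<le> \<beta> / (4 * (j+1))"
proof -
  define z where "z = j powr ((a-1)/2)"
  define K0 where "K0 = \<bar>s * ln (2/A)\<bar> + \<bar>ln (4/\<beta>)\<bar> + ln 2"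
  define K1 where "K1 = 2/(a-1)"
  have K0: "K0 \<ge> 0" by (simp add: K0_def)
  have K1: "K1 > 0" using a by (simp add: K1_def)
  have zz: "z * z = j powr (a-1)" unfolding z_def by (simp add: powr_add[symmetric])
  have z0: "z > 0" using j by (simp add: z_def)
  have lnj: "ln j \<le> K1 * z"
  proof -
    have "ln z = (a-1)/2 * ln j" using j by (simp add: z_def)
    then have "ln j = K1 * ln z" using a by (simp add: K1_def field_simps)
    also have "\<dots> \<le> K1 * z" using ln_le_minus_one[OF z0] K1 by (intro mult_left_mono) auto
    finally show ?thesis .
  qed
  have lnj1: "ln (j+1) \<le> ln 2 + ln j"
  proof -
    have "ln (j+1) \<le> ln (2*j)" using j by simp
    also have "\<dots> = ln 2 + ln j" using j by (simp add: ln_mult)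
    finally show ?thesis .
  qed
  have key: "s * ln (2/A) + ln (4/\<beta>) + ln (j+1) \<le> s * (z * z)"
  proof -
    have "s * ln (2/A) + ln (4/\<beta>) + ln (j+1) \<le> K0 + K1 * z"
      using lnj lnj1 unfolding K0_def by (smt (verit, best) abs_ge_self)
    also have "\<dots> \<le> (K0 + K1) * z" 
    proof -
      have "K0 * 1 \<le> K0 * z" using z1 K0 unfolding z_def by (rule mult_left_mono)
      then show ?thesis by (simp add: distrib_right)
    qed
    also have "\<dots> \<le> (s * z) * z"
    proof (rule mult_right_mono)
      show "K0 + K1 \<le> s * z" using z2 s unfolding z_def K0_def K1_def by (simp add: field_simps)
    qed (use z0 in simp)
    finally show ?thesis by (simp add: mult.assoc)
  qed
  have "(2/A) powr s * exp (- s * j powr (a-1)) = exp (s * ln (2/A) - s * (z * z))"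
    using A by (simp add: powr_def zz exp_diff exp_minus field_simps)
  also have "\<dots> \<le> exp (- ln (4/\<beta>) - ln (j+1))" using key by simp
  also have "\<dots> = \<beta> / (4 * (j+1))" using \<beta> j by (simp add: exp_diff exp_minus exp_add ln_div field_simps)
  finally show ?thesis .
qed



lemma powr_diff_bound:
  fixes j a :: real assumes j: "j \<ge> 1" and a: "a \<ge> 1"
  shows "j powr (a-1) \<le> j powr a - (j-1) powr a"
proof -
  have "(j-1) powr a = (j-1) * (j-1) powr (a-1)"
    using j powr_mult_base[of "j-1" "a-1"] by simp
  also have "\<dots> \<le> (j-1) * j powr (a-1)"
    using j a by (intro mult_left_mono powr_mono2) auto
  also have "\<dots> = j * j powr (a-1) - j powr (a-1)" by (simp add: algebra_simps)
  also have "j * j powr (a-1) = j powr a" using j powr_mult_base[of j "a-1"] by simp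
  finally show ?thesis by simp
qed

theorem theorem1p1:
  fixes \<Omega> :: "'a::euclidean_space set" and x :: 'a and E :: "('a \<Rightarrow> complex) set"
  assumes "open \<Omega>" and "connected \<Omega>" and "bounded \<Omega>" and "\<Omega> \<noteq> {}"
    and "x \<in> closure \<Omega>"
    and "closed_subspace_C \<Omega> E"
    and "\<exists>\<alpha> s t A C::real. 0 < \<alpha> \<and> \<alpha> < 1 \<and> 0 < s \<and> s \<le> 1 \<and> 0 < t \<and> t < 1 \<and>
          0 < A \<and> A < 1 \<and> C > 0 \<and>
          (\<forall>U. nbhd_in_closure \<Omega> x U \<and> rx x U < 1 \<longrightarrow>
             (\<exists>f\<in>E. f x = 1 \<and>
                (\<forall>y\<in>closure \<Omega> - U. cmod (f y) \<le> \<alpha>) \<and>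
                (\<forall>y\<in>U. cmod (f y) \<le> C * (ln (1 / rx x U)) powr t) \<and>
                (\<forall>\<epsilon>. 0 < \<epsilon> \<and> \<epsilon> < 1 \<longrightarrow>
                   Bcl \<Omega> x (A * rx x U * \<epsilon>) \<subseteq> {y\<in>closure \<Omega>. cmod (f y) < 1 + \<epsilon> powr s})))"
  shows "\<exists>F\<in>E. peaks_at \<Omega> F x"
proof -
  from assms(7) obtain \<alpha> s t A C :: real where all: "0 < \<alpha> \<and> \<alpha> < 1 \<and> 0 < s \<and> s \<le> 1 \<and> 0 < t \<and> t < 1 \<and>
          0 < A \<and> A < 1 \<and> C > 0 \<and>
          (\<forall>U. nbhd_in_closure \<Omega> x U \<and> rx x U < 1 \<longrightarrow>
             (\<exists>f\<in>E. f x = 1 \<and>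
                (\<forall>y\<in>closure \<Omega> - U. cmod (f y) \<le> \<alpha>) \<and>
                (\<forall>y\<in>U. cmod (f y) \<le> C * (ln (1 / rx x U)) powr t) \<and>
                (\<forall>\<epsilon>. 0 < \<epsilon> \<and> \<epsilon> < 1 \<longrightarrow>
                   Bcl \<Omega> x (A * rx x U * \<epsilon>) \<subseteq> {y\<in>closure \<Omega>. cmod (f y) < 1 + \<epsilon> powr s})))"
    by (elim exE) (rule that, assumption)
  have par: "0 < \<alpha>" "\<alpha> < 1" "0 < s" "s \<le> 1" "0 < t" "t < 1" "0 < A" "A < 1" "C > 0"
    using all by simp_all
  note H = all[THEN conjunct2, THEN conjunct2, THEN conjunct2, THEN conjunct2, THEN conjunct2,
     THEN conjunct2, THEN conjunct2, THEN conjunct2, THEN conjunct2]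
  define \<beta> where "\<beta> = 1 - \<alpha>"
  have \<beta>: "\<beta> > 0" using par by (simp add: \<beta>_def)
  define a where "a = (1 + 1/t)/2"
  have a1: "a > 1"
  proof -
    have "1/t > 1" using par by simp
    then show ?thesis by (simp add: a_def)
  qed
  have at: "a * t = (t+1)/2" using par by (simp add: a_def field_simps)
  define c where "c = (3 + t)/4"
  have c1: "c < 1" and cat: "a * t < c" and at0: "0 < a * t"
    using par at by (auto simp: c_def)
  obtain z0 where z0: "z0 \<in> closure \<Omega>" "z0 \<noteq> x"
  proof -
    have "\<not> \<Omega> \<subseteq> {x}"
    proof
      assume "\<Omega> \<subseteq> {x}"
      then have "\<Omega> = {x}" using assms(4) by blast
      then show False using assms(1) not_open_singleton by metis
    qed
    then obtain z where "z \<in> \<Omega>" "z \<noteq> x" by blast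
    then show ?thesis using that closure_subset by blast
  qed
  define R0 where "R0 = dist z0 x"
  have R0: "R0 > 0" using z0 by (simp add: R0_def)
  define Z0 where "Z0 = max 1 ((\<bar>s * ln (2/A)\<bar> + \<bar>ln (4/\<beta>)\<bar> + ln 2 + 2/(a-1)) / s)"
  obtain N1 where N1: "\<forall>j\<ge>N1. Z0 \<le> j powr ((a-1)/2)"
    using powr_eventually[of "(a-1)/2" Z0] a1 by auto
  obtain N2 where N2: "\<forall>j\<ge>N2. max (4*C/\<beta>) (4*\<alpha>/\<beta>) \<le> j powr (c - a*t)"
    using powr_eventually[of "c - a*t" "max (4*C/\<beta>) (4*\<alpha>/\<beta>)"] cat by auto
  define N :: nat where "N = nat \<lceil>max (max N1 N2) (max 2 (- ln R0))\<rceil>"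
  have NN: "real N \<ge> N1" "real N \<ge> N2" "real N \<ge> 2" "real N \<ge> - ln R0"
    unfolding N_def by linarith+
  define J where "J k = real N + real k" for k
  have J: "J k \<ge> N1" "J k \<ge> N2" "J k \<ge> 2" "J k \<ge> real N" for k
    using NN by (auto simp: J_def)
  define \<rho> where "\<rho> k = exp (- (J k powr a))" for k
  have \<rho>pos: "\<rho> k > 0" for k by (simp add: \<rho>_def)
  have \<rho>dec: "\<rho> (Suc k) < \<rho> k" for k
  proof -
    have "J k powr a < J (Suc k) powr a" using a1 J(3)[of k] by (intro powr_less_mono2) (auto simp: J_def)
    then show ?thesis by (simp add: \<rho>_def)
  qed
  have \<rho>le: "\<rho> k \<le> exp (- J k)" for k
  proof -
    have "J k powr 1 \<le> J k powr a" using a1 J(3)[of k] by (intro powr_mono) auto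
    then show ?thesis using J(3)[of k] by (simp add: \<rho>_def)
  qed
  have \<rho>0: "\<exists>k. \<rho> k < d" if d: "d > 0" for d
  proof
    define k where "k = nat \<lceil>- ln d\<rceil> + 1"
    have "- ln d < J k" using J(4)[of k] by (simp add: k_def J_def) linarith
    then have "exp (- J k) < exp (ln d)" by simp
    then show "\<rho> k < d" using \<rho>le[of k] d by simp
  qed
  have \<rho>R0: "\<rho> k \<le> R0" for k
  proof -
    have "exp (- J k) \<le> exp (ln R0)" using J(4)[of k] NN(4) by simp
    then show ?thesis using \<rho>le[of k] R0 by simp
  qed
  have \<rho>1: "\<rho> k < 1" for k
  proof -
    have "J k powr a > 0" using J(3)[of k] by simp
    then show ?thesis by (simp add: \<rho>_def)
  qed
  have ln\<rho>: "ln (1 / \<rho> k) = J k powr a" for k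
    by (simp add: \<rho>_def ln_div)
  define U where "U k = closure \<Omega> \<inter> cball x (\<rho> k)" for k
  have conn: "connected ((\<lambda>y. dist y x) ` closure \<Omega>)"
    by (intro connected_continuous_image continuous_intros connected_imp_connected_closure assms(2))
  have Urx: "rx x (U k) = \<rho> k" for k
  proof -
    have "\<rho> k \<in> (\<lambda>y. dist y x) ` closure \<Omega>"
    proof (rule connectedD_interval[OF conn])
      show "0 \<in> (\<lambda>y. dist y x) ` closure \<Omega>" using assms(5) by force
      show "R0 \<in> (\<lambda>y. dist y x) ` closure \<Omega>" using z0 by (auto simp: R0_def)
    qed (use \<rho>pos[of k] \<rho>R0[of k] in auto)
    then have mem: "\<rho> k \<in> (\<lambda>y. dist y x) ` U k" by (auto simp: U_def dist_commute)
    show ?thesis unfolding rx_def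
      by (rule cSup_eq_maximum[OF mem]) (auto simp: U_def dist_commute)
  qed
  have Unb: "nbhd_in_closure \<Omega> x (U k)" for k
    unfolding nbhd_in_closure_def
    by (intro conjI exI[of _ "ball x (\<rho> k)"]) (use \<rho>pos[of k] in \<open>auto simp: U_def\<close>)
  have "\<forall>k. \<exists>f. f \<in> E \<and> f x = 1 \<and>
                (\<forall>y\<in>closure \<Omega> - U k. cmod (f y) \<le> \<alpha>) \<and>
                (\<forall>y\<in>U k. cmod (f y) \<le> C * (J k powr a) powr t) \<and>
                (\<forall>\<epsilon>. 0 < \<epsilon> \<and> \<epsilon> < 1 \<longrightarrow>
                   Bcl \<Omega> x (A * \<rho> k * \<epsilon>) \<subseteq> {y\<in>closure \<Omega>. cmod (f y) < 1 + \<epsilon> powr s})"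
  proof
    fix k
    from H[rule_format, of "U k"] Unb[of k] \<rho>1[of k] show "\<exists>f. f \<in> E \<and> f x = 1 \<and>
                (\<forall>y\<in>closure \<Omega> - U k. cmod (f y) \<le> \<alpha>) \<and>
                (\<forall>y\<in>U k. cmod (f y) \<le> C * (J k powr a) powr t) \<and>
                (\<forall>\<epsilon>. 0 < \<epsilon> \<and> \<epsilon> < 1 \<longrightarrow>
                   Bcl \<Omega> x (A * \<rho> k * \<epsilon>) \<subseteq> {y\<in>closure \<Omega>. cmod (f y) < 1 + \<epsilon> powr s})"
      by (simp add: Urx ln\<rho> Bex_def)
  qed
  from choice[OF this] obtain g where g: "\<And>k. g k \<in> E \<and> g k x = 1 \<and>
                (\<forall>y\<in>closure \<Omega> - U k. cmod (g k y) \<le> \<alpha>) \<and>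
                (\<forall>y\<in>U k. cmod (g k y) \<le> C * (J k powr a) powr t) \<and>
                (\<forall>\<epsilon>. 0 < \<epsilon> \<and> \<epsilon> < 1 \<longrightarrow>
                   Bcl \<Omega> x (A * \<rho> k * \<epsilon>) \<subseteq> {y\<in>closure \<Omega>. cmod (g k y) < 1 + \<epsilon> powr s})"
    by blast
  have gcf: "g k \<in> cfun_space \<Omega>" for k
    using g[of k] assms(6) unfolding closed_subspace_C_def by blast
  define M where "M k = max \<alpha> (C * (J k powr a) powr t)" for k
  have Mb: "M k \<le> \<beta>/4 * J k powr c" for k
  proof -
    define j where "j = J k"
    have j1: "j \<ge> 1" using J(3)[of k] by (simp add: j_def)
    have h: "max (4*C/\<beta>) (4*\<alpha>/\<beta>) \<le> j powr (c - a*t)" using N2 J(2)[of k] by (simp add: j_def)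
    have spl: "j powr c = j powr (a*t) * j powr (c - a*t)" by (simp add: powr_add[symmetric])
    have e1: "C * (j powr a) powr t = C * j powr (a*t)" by (simp add: powr_powr)
    have "C \<le> \<beta>/4 * j powr (c - a*t)"
    proof -
      have "4*C/\<beta> \<le> j powr (c - a*t)" using h by simp
      then show ?thesis using \<beta> by (simp add: field_simps)
    qed
    then have "j powr (a*t) * C \<le> j powr (a*t) * (\<beta>/4 * j powr (c - a*t))"
      by (intro mult_left_mono) auto
    then have c1': "C * (j powr a) powr t \<le> \<beta>/4 * j powr c" unfolding e1 spl by (simp add: algebra_simps)
    have "j powr (c - a*t) \<le> j powr c" using j1 at0 by (intro powr_mono) auto
    then have "4*\<alpha>/\<beta> \<le> j powr c" using h by simp
    then have "\<alpha> \<le> \<beta>/4 * j powr c" using \<beta> by (simp add: field_simps)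
    then show ?thesis using c1' by (simp add: M_def j_def)
  qed
  have Jc: "J k powr c \<le> J k" for k
  proof -
    have "J k powr c \<le> J k powr 1" using J(3)[of k] c1 by (intro powr_mono) auto
    then show ?thesis using J(3)[of k] by simp
  qed
  show ?thesis
  proof (rule peak_construction[where N = "real N" and g = g and \<rho> = \<rho> and M = M and \<alpha> = \<alpha> and s = s and A = A])
    show "closed_subspace_C \<Omega> E" by (rule assms(6))
    show "g k \<in> E" "g k x = 1" for k using g by auto
    show "0 \<le> \<alpha>" "\<alpha> < 1" "0 < s" "0 < A" using par by auto
    show "1 \<le> real N" using NN by simp
    show "0 < \<rho> k" "\<rho> (Suc k) < \<rho> k" for k using \<rho>pos \<rho>dec by auto
    show "\<And>d. d > 0 \<Longrightarrow> \<exists>k. \<rho> k < d" by (rule \<rho>0)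
    show "cmod (g k y) \<le> \<alpha>" if "y \<in> closure \<Omega>" "\<rho> k < dist y x" for k y
      using g[of k] that by (auto simp: U_def dist_commute)
    show "cmod (g k y) \<le> M k" for k y
    proof (cases "y \<in> closure \<Omega>")
      case True
      show ?thesis
      proof (cases "y \<in> U k")
        case True
        then have "cmod (g k y) \<le> C * (J k powr a) powr t" using g[of k] by blast
        then show ?thesis by (simp add: M_def)
      next
        case False
        then have "cmod (g k y) \<le> \<alpha>" using g[of k] \<open>y \<in> closure \<Omega>\<close> by blast
        then show ?thesis by (simp add: M_def)
      qed
    next
      case False
      then have "g k y = 0" using gcf[of k] by (simp add: cfun_space_def)
      then show ?thesis using par by (simp add: M_def)
    qed
    show "cmod (g k y) < 1 + \<epsilon> powr s"
      if "y \<in> closure \<Omega>" "0 < \<epsilon>" "\<epsilon> < 1" "dist y x < A * \<rho> k * \<epsilon>" for k y \<epsilon>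
    proof -
      have "y \<in> Bcl \<Omega> x (A * \<rho> k * \<epsilon>)" using that by (simp add: Bcl_def dist_commute)
      then show ?thesis using g[of k] that by blast
    qed
    show "(2 * \<rho> k / (A * \<rho> (k-1))) powr s \<le> (1-\<alpha>) / (4 * (real N + real k + 1))"
      if k: "k \<ge> 1" for k
    proof -
      define j where "j = J k"
      have j1: "j \<ge> 1" using J(3)[of k] by (simp add: j_def)
      have Jk1: "J (k-1) = j - 1" using k by (simp add: J_def j_def of_nat_diff)
      have eq: "2 * \<rho> k / (A * \<rho> (k-1)) = (2/A) * exp (- (j powr a - (j-1) powr a))"
        using par(7) by (simp add: \<rho>_def Jk1[simplified] j_def[symmetric] exp_diff exp_minus field_simps)
      have "(2 * \<rho> k / (A * \<rho> (k-1))) powr s = (2/A) powr s * exp (- s * (j powr a - (j-1) powr a))"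
        unfolding eq powr_mult exp_powr_real by (simp add: algebra_simps)
      also have "\<dots> \<le> (2/A) powr s * exp (- s * j powr (a-1))"
        using powr_diff_bound[OF j1, of a] a1 par(3) by (intro mult_left_mono) auto
      also have "\<dots> \<le> \<beta> / (4 * (j+1))"
      proof (rule exp_decay_bound)
        have "Z0 \<le> j powr ((a-1)/2)" using N1 J(1)[of k] by (simp add: j_def)
        then show "j powr ((a-1)/2) \<ge> 1"
          "j powr ((a-1)/2) \<ge> (\<bar>s * ln (2/A)\<bar> + \<bar>ln (4/\<beta>)\<bar> + ln 2 + 2/(a-1)) / s"
          unfolding Z0_def by auto
      qed (use par \<beta> a1 j1 in auto)
      finally show ?thesis by (simp add: \<beta>_def j_def J_def)
    qed
    show "M k \<le> (1-\<alpha>)/4 * (real N + real k)" for k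
      using Mb[of k] Jc[of k] \<beta> by (simp add: \<beta>_def J_def) (smt (verit) mult_left_mono)
    show "summable (\<lambda>k. (real N / (real N + real k) - real N / (real N + real (Suc k))) * M k)"
    proof (rule summable_comparison_test'[where N=0])
      have "summable (\<lambda>n. real n powr (c-2))" using summable_real_powr_iff c1 by simp
      then have "summable (\<lambda>k. real (k + N) powr (c-2))"
        using summable_iff_shift[of "\<lambda>n. real n powr (c-2)" N] by simp
      then show "summable (\<lambda>k. (real N * \<beta>/4) * real (k + N) powr (c-2))"
        by (rule summable_mult)
    next
      fix k :: nat
      define j where "j = J k"
      have j1: "j \<ge> 1" using J(3)[of k] by (simp add: j_def)
      have w: "real N / (real N + real k) - real N / (real N + real (Suc k)) = real N / (j * (j+1))"
        using j1 by (simp add: j_def J_def field_simps)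
      have Mnn: "M k \<ge> 0" using par by (simp add: M_def)
      have "real N / (j * (j+1)) \<le> real N / (j * j)"
        using j1 by (intro divide_left_mono mult_left_mono mult_pos_pos) auto
      have "real N / (j * (j+1)) * M k \<le> real N / (j * j) * (\<beta>/4 * j powr c)"
        using Mb[of k] Mnn \<open>real N / (j * (j+1)) \<le> real N / (j * j)\<close> j1
        by (intro mult_mono) (auto simp: j_def)
      also have "\<dots> = (real N * \<beta>/4) * (j powr c / j powr 2)"
        using j1 by (simp add: power2_eq_square)
      also have "\<dots> = (real N * \<beta>/4) * j powr (c-2)" by (simp add: powr_diff)
      finally have le: "real N / (j * (j+1)) * M k \<le> (real N * \<beta>/4) * j powr (c-2)" .
      have "real N / (j * (j+1)) * M k \<ge> 0" using Mnn j1 by simp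
      then show "norm ((real N / (real N + real k) - real N / (real N + real (Suc k))) * M k)
          \<le> (real N * \<beta>/4) * real (k + N) powr (c-2)"
        using le unfolding w by (simp add: j_def J_def add.commute)
    qed
  qed
qed

end
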